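(* For all positive integers $n$ and $k$, $$\sum_{i=1}^{k}(-1)^i\binom{ni}{k}\binom{k+1}{i+1}=(-1)^k\binom{n+k-1}{k}.$$
   Context: Binomial coefficients $\binom{m}{j}$ for nonnegative integers $m,j$ are the usual ones, with $\binom{m}{j}=0$ when $j>m$. *)

theory Defs
  imports Main
begin

end

theory Submission imports Defs "HOL-Computational_Algebra.Polynomial" begin

lemma A: "fact k * int (x choose k) = (\<Prod>i<k. int x - int i)"
proof -
  have "real (x choose k) = (of_nat x gchoose k)" by (simp add: binomial_gbinomial)
  then have "real_of_int (fact k * int (x choose k)) = real_of_int (\<Prod>i<k. int x - int i)"
    using gbinomial_mult_fact[of k "of_nat x :: real"] by (simp add: atLeast0LessThan)
  then show ?thesis by (simp only: of_int_eq_iff)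
qed

lemma mono0: "\<forall>d<m. (\<Sum>j\<le>m. (-1::int)^j * int (m choose j) * int j ^ d) = 0"
proof (induction m)
  case 0 then show ?case by simp
next
  case (Suc m)
  show ?case
  proof (intro allI impI)
    fix d assume d: "d < Suc m"
    show "(\<Sum>j\<le>Suc m. (-1::int)^j * int (Suc m choose j) * int j ^ d) = 0"
    proof (cases d)
      case 0 then show ?thesis using choose_alternating_sum[of "Suc m", where 'a=int] by simp
    next
      case (Suc e)
      have e: "e < m" using d Suc by simp
      have "(\<Sum>j\<le>Suc m. (-1::int)^j * int (Suc m choose j) * int j ^ d)
          = (\<Sum>l\<le>m. (-1::int)^Suc l * int (Suc m choose Suc l) * int (Suc l) ^ d)"
        by (subst sum.atMost_Suc_shift) (simp add: Suc)
      also have "\<dots> = (\<Sum>l\<le>m. - (int (Suc m)) * ((-1::int)^l * int (m choose l) * (int l + 1) ^ e))"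
      proof (rule sum.cong[OF refl])
        fix l
        have "int (Suc m choose Suc l) * int (Suc l) = int (Suc m) * int (m choose l)"
          using Suc_times_binomial_eq[of m l] by (metis mult.commute of_nat_mult)
        then show "(-1::int)^Suc l * int (Suc m choose Suc l) * int (Suc l) ^ d
            = - (int (Suc m)) * ((-1::int)^l * int (m choose l) * (int l + 1) ^ e)"
        proof -
          have "(-1::int)^Suc l * int (Suc m choose Suc l) * int (Suc l) ^ d
             = - ((int (Suc m choose Suc l) * int (Suc l)) * ((-1::int)^l * int (Suc l) ^ e))"
            using Suc by (simp only: power_Suc) (simp add: algebra_simps del: binomial_Suc_Suc of_nat_Suc)
          also have "\<dots> = - (int (Suc m)) * ((-1::int)^l * int (m choose l) * (int l + 1) ^ e)"
            unfolding \<open>int (Suc m choose Suc l) * int (Suc l) = int (Suc m) * int (m choose l)\<close>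
            by (simp add: algebra_simps del: binomial_Suc_Suc)
          finally show ?thesis .
        qed
      qed
      also have "\<dots> = - int (Suc m) * (\<Sum>l\<le>m. (-1::int)^l * int (m choose l) * (int l + 1) ^ e)"
        by (simp add: sum_distrib_left)
      also have "(\<Sum>l\<le>m. (-1::int)^l * int (m choose l) * (int l + 1) ^ e)
          = (\<Sum>l\<le>m. \<Sum>f\<le>e. int (e choose f) * ((-1::int)^l * int (m choose l) * int l ^ f))"
      proof (rule sum.cong[OF refl])
        fix l
        have "(int l + 1)^e = (\<Sum>f\<le>e. int (e choose f) * int l ^ f)"
          using binomial_ring[of "int l" 1 e] by (simp add: mult.commute)
        then show "(-1::int)^l * int (m choose l) * (int l + 1) ^ e
          = (\<Sum>f\<le>e. int (e choose f) * ((-1::int)^l * int (m choose l) * int l ^ f))"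
          by (simp add: sum_distrib_left algebra_simps)
      qed
      also have "\<dots> = (\<Sum>f\<le>e. int (e choose f) * (\<Sum>l\<le>m. (-1::int)^l * int (m choose l) * int l ^ f))"
        by (subst sum.swap) (simp add: sum_distrib_left)
      also have "\<dots> = 0" using Suc.IH e by simp
      finally show ?thesis by simp
    qed
  qed
qed

lemma polyfd: "degree p < m \<Longrightarrow> (\<Sum>j\<le>m. (-1::int)^j * int (m choose j) * poly p (int j)) = 0"
proof -
  assume dp: "degree p < m"
  have "(\<Sum>j\<le>m. (-1::int)^j * int (m choose j) * poly p (int j))
     = (\<Sum>j\<le>m. \<Sum>i\<le>degree p. coeff p i * ((-1::int)^j * int (m choose j) * int j ^ i))"
    by (simp add: poly_altdef sum_distrib_left algebra_simps)
  also have "\<dots> = (\<Sum>i\<le>degree p. coeff p i * (\<Sum>j\<le>m. (-1::int)^j * int (m choose j) * int j ^ i))"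
    by (subst sum.swap) (simp add: sum_distrib_left)
  also have "\<dots> = 0" using mono0[of m] dp by simp
  finally show ?thesis .
qed

theorem mainTheorem2:
  fixes n k :: nat
  assumes "n \<ge> 1" and "k \<ge> 1"
  shows "(\<Sum>i=1..k. (-1::int) ^ i * int ((n * i) choose k) * int ((k + 1) choose (i + 1)))
         = (-1) ^ k * int ((n + k - 1) choose k)"
proof -
  define p :: "int poly" where "p = (\<Prod>i<k. [:-(int n) - int i, int n:])"
  have pv: "poly p x = (\<Prod>i<k. int n * x - int n - int i)" for x
    unfolding p_def by (simp add: poly_prod algebra_simps)
  have "degree p \<le> (\<Sum>i<k. (degree \<circ> (\<lambda>i. [:-(int n) - int i, int n:])) i)"
    unfolding p_def by (rule degree_prod_sum_le) simp
  also have "\<dots> \<le> (\<Sum>i<k. 1)" by (rule sum_mono) simp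
  finally have dp: "degree p < Suc k" by simp
  have z: "(\<Sum>j\<le>Suc k. (-1::int)^j * int (Suc k choose j) * poly p (int j)) = 0"
    by (rule polyfd[OF dp])
  have p0: "poly p 0 = (-1)^k * (fact k * int ((n + k - 1) choose k))"
  proof -
    have "poly p 0 = (\<Prod>i<k. (-1) * (int n + int i))" by (simp add: pv)
    also have "\<dots> = (-1)^k * (\<Prod>i<k. int n + int i)" by (simp only: prod.distrib prod_constant card_lessThan)
    also have "(\<Prod>i<k. int n + int i) = (\<Prod>i<k. int n + int (k - Suc i))"
      by (rule prod.nat_diff_reindex[symmetric])
    also have "\<dots> = (\<Prod>i<k. int (n + k - 1) - int i)"
      by (rule prod.cong[OF refl]) (use assms in auto)
    also have "\<dots> = fact k * int ((n + k - 1) choose k)" by (rule A[symmetric])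
    finally show ?thesis .
  qed
  have ps: "poly p (int (Suc i)) = fact k * int ((n * i) choose k)" for i
  proof -
    have "poly p (int (Suc i)) = (\<Prod>l<k. int (n * i) - int l)" by (simp add: pv algebra_simps)
    then show ?thesis by (simp add: A)
  qed
  define f where "f i = (-1::int) ^ i * int ((n * i) choose k) * int ((k + 1) choose (i + 1))" for i
  have f0: "f 0 = 0" using assms by (simp add: f_def)
  have "0 = poly p 0 + (\<Sum>i\<le>k. (-1::int)^Suc i * int (Suc k choose Suc i) * poly p (int (Suc i)))"
    using z by (subst (asm) sum.atMost_Suc_shift) simp
  also have "(\<Sum>i\<le>k. (-1::int)^Suc i * int (Suc k choose Suc i) * poly p (int (Suc i)))
      = - fact k * (\<Sum>i\<le>k. f i)"
    by (simp only: ps f_def sum_distrib_left) (simp add: algebra_simps del: binomial_Suc_Suc)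
  also have "(\<Sum>i\<le>k. f i) = (\<Sum>i=1..k. f i)"
  proof -
    have "{..k} = insert 0 {1..k}" by auto
    then show ?thesis using f0 by simp
  qed
  finally have "fact k * (\<Sum>i=1..k. f i) = fact k * ((-1)^k * int ((n + k - 1) choose k))"
    using p0 by (simp add: algebra_simps)
  then show ?thesis unfolding f_def by simp
qed

end
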